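(* Let $k<m$ be positive integers such that $m\ne k(c^2-1)+1$ for every integer $c\ge 2$. Then there exists a single-category instance $I$ with $m$ goods, cardinality constraint $k$, and some number $n$ of agents with $kn\ge m$, such that $$\frac{\text{OPT-USW}(I)}{\max_{\mathcal{A}\in \mathcal{C}_k(I)}\text{USW}(\mathcal{A})}\ge \frac{1}{2}\left(-1+\sqrt{1+\frac{m-1}{k}}\right).$$
   Context: A single-category instance consists of $n$ agents and a set $M$ of $m$ indivisible goods; each agent $i$ has an additive utility function $u_i:2^M\to\mathbb{R}_{\ge 0}$ with $u_i(\emptyset)=0$ and $u_i(M)=1$. An allocation is a partition $(A_1,\dots,A_n)$ of $M$, agent $i$ receiving $A_i$. It is cardinal (for constraint $k$) if $|A_i|\le k$ for all $i$; $\mathcal{C}_k(I)$ is the set of cardinal allocations. $\text{USW}(\mathcal{A})=\sum_i u_i(A_i)$ and $\text{OPT-USW}(I)$ is its maximum over all allocations. *)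

theory Defs
  imports "HOL-Analysis.Analysis"
begin

text \<open>Single-category instance: agents are 0..<n, goods are 0..<m.
  u i g is the utility of agent i for good g; utilities are additive.
  An allocation (partition of the goods among agents) is represented by a map
  a from goods to agents, a in PiE {..<m} (%_. {..<n}); agent i receives
  A_i = {g<m. a g = i}.\<close>

definition valid_instance :: "nat \<Rightarrow> nat \<Rightarrow> (nat \<Rightarrow> nat \<Rightarrow> real) \<Rightarrow> bool" where
  "valid_instance n m u \<longleftrightarrow>
     (\<forall>i<n. \<forall>g<m. u i g \<ge> 0) \<and> (\<forall>i<n. (\<Sum>g<m. u i g) = 1)"

definition allocations :: "nat \<Rightarrow> nat \<Rightarrow> (nat \<Rightarrow> nat) set" where
  "allocations n m = PiE {..<m} (\<lambda>_. {..<n})"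

definition agent_bundle :: "nat \<Rightarrow> (nat \<Rightarrow> nat) \<Rightarrow> nat \<Rightarrow> nat set" where
  "agent_bundle m a i = {g. g < m \<and> a g = i}"

definition cardinal_allocations :: "nat \<Rightarrow> nat \<Rightarrow> nat \<Rightarrow> (nat \<Rightarrow> nat) set" where
  "cardinal_allocations n m k = {a \<in> allocations n m. \<forall>i<n. card (agent_bundle m a i) \<le> k}"

definition USW :: "nat \<Rightarrow> nat \<Rightarrow> (nat \<Rightarrow> nat \<Rightarrow> real) \<Rightarrow> (nat \<Rightarrow> nat) \<Rightarrow> real" where
  "USW n m u a = (\<Sum>i<n. \<Sum>g\<in>agent_bundle m a i. u i g)"

definition OPT_USW :: "nat \<Rightarrow> nat \<Rightarrow> (nat \<Rightarrow> nat \<Rightarrow> real) \<Rightarrow> real" where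
  "OPT_USW n m u = Max (USW n m u ` allocations n m)"

definition max_cardinal_USW :: "nat \<Rightarrow> nat \<Rightarrow> nat \<Rightarrow> (nat \<Rightarrow> nat \<Rightarrow> real) \<Rightarrow> real" where
  "max_cardinal_USW n m k u = Max (USW n m u ` cardinal_allocations n m k)"

end

theory Submission imports Defs begin

lemma block_set:
  fixes K c j :: nat
  assumes "0 < K" "j < c"
  shows "{g. 0 < g \<and> g \<le> c*K \<and> (g-1) div K = j} = {j*K+1..j*K+K}"
proof (intro set_eqI iffI)
  fix g assume "g \<in> {g. 0 < g \<and> g \<le> c*K \<and> (g-1) div K = j}"
  then have g: "0 < g" "(g-1) div K = j" by auto
  have "j*K \<le> g-1" using g(2) by (metis div_times_less_eq_dividend mult.commute)
  moreover have "g-1 < j*K+K" using g(2) assms(1)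
    by (metis add.commute div_less_iff_less_mult mult.commute mult_Suc_right lessI)
  ultimately show "g \<in> {j*K+1..j*K+K}" using g(1) by auto
next
  fix g assume "g \<in> {j*K+1..j*K+K}"
  then have g: "j*K+1 \<le> g" "g \<le> j*K+K" by auto
  have "(g-1) div K = j"
  proof (rule div_nat_eqI)
    show "K * j \<le> g - 1" using g by (simp add: mult.commute)
    show "g - 1 < K * Suc j" using g assms by (simp add: mult.commute)
  qed
  moreover have "j*K+K \<le> c*K" using assms
    by (metis add.commute mult_Suc mult_le_mono1 Suc_leI)
  ultimately show "g \<in> {g. 0 < g \<and> g \<le> c*K \<and> (g-1) div K = j}" using g by auto
qed


lemma sum_if_const:
  fixes a :: real and m :: nat
  shows "(\<Sum>g<m. if P g then a else 0) = real (card {g\<in>{..<m}. P g}) * a"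
proof -
  have "(\<Sum>g<m. if P g then a else 0) = (\<Sum>g\<in>{g\<in>{..<m}. P g}. a)"
    by (rule sum.inter_filter[symmetric]) simp
  then show ?thesis by simp
qed

theorem lemma2:
  fixes k m :: nat
  assumes "0 < k" and "k < m"
    and "\<forall>c::int. c \<ge> 2 \<longrightarrow> int m \<noteq> int k * (c^2 - 1) + 1"
  shows "\<exists>(n::nat) (u :: nat \<Rightarrow> nat \<Rightarrow> real).
           k * n \<ge> m \<and> valid_instance n m u \<and>
           OPT_USW n m u / max_cardinal_USW n m k u
             \<ge> (1/2) * (-1 + sqrt (1 + (real m - 1) / real k))"
proof -
  define M where "M = m - 1"
  have kM: "k \<le> M" using assms unfolding M_def by auto
  have "\<exists>c. c*c*k \<le> M \<and> (\<forall>y. y*y*k \<le> M \<longrightarrow> y \<le> c)"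
  proof -
    have "\<forall>y. y*y*k \<le> M \<longrightarrow> y < Suc M"
    proof (intro allI impI)
      fix y assume "y*y*k \<le> M"
      moreover have "y \<le> y*y*k"
      proof -
        have "y*y*1 \<le> y*y*k" using assms(1) by (intro mult_le_mono2) simp
        then show ?thesis using le_square[of y] by simp
      qed
      ultimately show "y < Suc M" by linarith
    qed
    moreover have "1*1*k \<le> M" using kM by simp
    ultimately show ?thesis using ex_has_greatest_nat[of "\<lambda>y. y*y*k \<le> M" 1 "\<lambda>y. y" "Suc M"] by blast
  qed
  then obtain c where c1: "c*c*k \<le> M" and cmax: "\<And>y. y*y*k \<le> M \<Longrightarrow> y \<le> c" by blast
  have cpos: "1 \<le> c" using cmax[of 1] kM by simp
  have cbig: "M < (c+1)*(c+1)*k" proof (rule ccontr)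
    assume "\<not> M < (c+1)*(c+1)*k"
    then have "(c+1)*(c+1)*k \<le> M" by (simp only: not_less)
    then have "c+1 \<le> c" by (rule cmax)
    then show False by simp
  qed
  define K where "K = c*k"
  have Kpos: "0 < K" using cpos assms(1) K_def by simp
  have cK: "c*K \<le> M" using c1 unfolding K_def by (simp only: mult.assoc)
  have cKm: "c*K < m" using cK assms unfolding M_def by simp
  have cm: "c < m" proof -
    have "c \<le> c*K" using Kpos by simp
    then show ?thesis using cKm by linarith
  qed
  define B where "B = (\<lambda>i. {g. 0 < g \<and> g \<le> c*K \<and> (g-1) div K = i - 1})"
  have Beq: "B i = {(i-1)*K+1..(i-1)*K+K}" if "1 \<le> i" "i \<le> c" for i
    unfolding B_def using block_set[OF Kpos, of "i-1" c] that by simp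
  have cardB: "card (B i) = K" if "1 \<le> i" "i \<le> c" for i
    using Beq[OF that] by simp
  have Bsub: "B i \<subseteq> {..<m}" for i using cKm unfolding B_def by auto
  define u :: "nat \<Rightarrow> nat \<Rightarrow> real" where
    "u = (\<lambda>i g. if i = 0 \<or> c < i then (if g = 0 then 1 else 0)
                 else (if g \<in> B i then 1 / real K else 0))"
  have unn: "0 \<le> u i g" for i g unfolding u_def by auto
  have valid: "valid_instance m m u"
    unfolding valid_instance_def
  proof (intro conjI allI impI)
    fix i g assume "i < m" "g < m" then show "0 \<le> u i g" using unn by simp
  next
    fix i assume im: "i < m"
    show "(\<Sum>g<m. u i g) = 1"
    proof (cases "i = 0 \<or> c < i")
      case True
      then have "(\<Sum>g<m. u i g) = (\<Sum>g<m. if g = 0 then 1 else 0)" unfolding u_def by simp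
      also have "\<dots> = 1" using assms by (simp add: sum.delta')
      finally show ?thesis .
    next
      case False
      then have "(\<Sum>g<m. u i g) = (\<Sum>g<m. if g \<in> B i then 1 / real K else 0)" unfolding u_def by simp
      also have "\<dots> = real (card {g\<in>{..<m}. g \<in> B i}) * (1 / real K)" by (rule sum_if_const)
      also have "{g\<in>{..<m}. g \<in> B i} = B i" using Bsub by auto
      also have "real (card (B i)) * (1 / real K) = 1" using cardB[of i] False Kpos by simp
      finally show ?thesis .
    qed
  qed

  have finA: "finite (allocations m m)" unfolding allocations_def by (simp add: finite_PiE)
  have finC: "finite (cardinal_allocations m m k)"
    using finA unfolding cardinal_allocations_def by simp
  have upper: "USW m m u a \<le> 2" if aC: "a \<in> cardinal_allocations m m k" for a
  proof -
    have aA: "a \<in> allocations m m" and card_le: "\<And>i. i < m \<Longrightarrow> card (agent_bundle m a i) \<le> k"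
      using aC unfolding cardinal_allocations_def by auto
    have a0: "a 0 < m" using aA assms unfolding allocations_def by (auto simp: PiE_iff)
    have finAB: "finite (agent_bundle m a i)" for i unfolding agent_bundle_def by simp
    define h where "h = (\<lambda>i. (if 1 \<le> i \<and> i \<le> c then 1 / real c else 0)
                           + (if a 0 = i then (1::real) else 0))"
    have each: "(\<Sum>g\<in>agent_bundle m a i. u i g) \<le> h i" if im: "i < m" for i
    proof (cases "i = 0 \<or> c < i")
      case True
      then have "(\<Sum>g\<in>agent_bundle m a i. u i g) = (\<Sum>g\<in>agent_bundle m a i. if g = 0 then 1 else 0)"
        unfolding u_def by simp
      also have "\<dots> = (if 0 \<in> agent_bundle m a i then 1 else 0)"
        using finAB by (simp add: sum.delta')
      also have "\<dots> = (if a 0 = i then 1 else 0)" unfolding agent_bundle_def using assms by auto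
      also have "\<dots> \<le> h i" unfolding h_def by simp
      finally show ?thesis .
    next
      case False
      have "(\<Sum>g\<in>agent_bundle m a i. u i g) \<le> (\<Sum>g\<in>agent_bundle m a i. 1 / real K)"
        using False by (intro sum_mono) (simp add: u_def)
      also have "\<dots> = real (card (agent_bundle m a i)) / real K" by simp
      also have "\<dots> \<le> real k / real K"
        using card_le[OF im] Kpos by (simp add: divide_right_mono)
      also have "\<dots> = 1 / real c" unfolding K_def using assms(1) by simp
      also have "\<dots> \<le> h i" unfolding h_def using False by simp
      finally show ?thesis .
    qed
    have "USW m m u a \<le> (\<Sum>i<m. h i)" unfolding USW_def by (rule sum_mono) (rule each, simp)
    also have "\<dots> = (\<Sum>i<m. if 1 \<le> i \<and> i \<le> c then 1 / real c else 0)
                    + (\<Sum>i<m. if a 0 = i then (1::real) else 0)"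
      unfolding h_def by (simp add: sum.distrib)
    also have "(\<Sum>i<m. if a 0 = i then (1::real) else 0) = 1" using a0 by (simp add: sum.delta)
    also have "(\<Sum>i<m. if 1 \<le> i \<and> i \<le> c then 1 / real c else 0)
               = real (card {i\<in>{..<m}. 1 \<le> i \<and> i \<le> c}) * (1 / real c)"
      by (rule sum_if_const)
    also have "{i\<in>{..<m}. 1 \<le> i \<and> i \<le> c} = {1..c}" using cm by auto
    also have "real (card {1..c}) * (1 / real c) = 1" using cpos by simp
    finally show ?thesis by simp
  qed
  have ne: "restrict id {..<m} \<in> cardinal_allocations m m k"
  proof -
    have bund: "agent_bundle m (restrict id {..<m}) i = (if i < m then {i} else {})" for i
      unfolding agent_bundle_def by auto
    show ?thesis unfolding cardinal_allocations_def allocations_def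
      using assms(1) by (auto simp: bund)
  qed
  have maxle: "max_cardinal_USW m m k u \<le> 2"
    unfolding max_cardinal_USW_def using finC ne upper by (subst Max_le_iff) auto
  have maxpos: "0 < max_cardinal_USW m m k u"
  proof -
    have bund: "agent_bundle m (restrict id {..<m}) i = (if i < m then {i} else {})" for i
      unfolding agent_bundle_def by auto
    have "USW m m u (restrict id {..<m}) = (\<Sum>i<m. u i i)"
      unfolding USW_def by (rule sum.cong) (auto simp: bund)
    also have "\<dots> \<ge> u 0 0" using assms unn by (intro member_le_sum) auto
    finally have "1 \<le> USW m m u (restrict id {..<m})" by (simp add: u_def)
    also have "\<dots> \<le> max_cardinal_USW m m k u"
      unfolding max_cardinal_USW_def using finC ne by (intro Max_ge) auto
    finally show ?thesis by simp
  qed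
  define a where "a = (\<lambda>g. if g < m then (if 0 < g \<and> g \<le> c*K then (g-1) div K + 1 else 0) else undefined)"
  have aA: "a \<in> allocations m m"
  proof -
    have "(g-1) div K + 1 < m" if "0 < g" "g \<le> c*K" for g
    proof -
      have "g - 1 < K * c" using that Kpos by (simp add: mult.commute)
      then have "(g-1) div K < c" by (simp add: div_less_iff_less_mult Kpos mult.commute)
      then show ?thesis using cm by simp
    qed
    then show ?thesis unfolding allocations_def a_def using assms by (auto simp: PiE_iff extensional_def)
  qed
  have val1: "(\<Sum>g\<in>agent_bundle m a i. u i g) = 1" if "i \<le> c" for i
  proof (cases "i = 0")
    case True
    have "(\<Sum>g\<in>agent_bundle m a i. u i g) = (\<Sum>g\<in>agent_bundle m a i. if g = 0 then 1 else 0)"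
      unfolding u_def using True by simp
    also have "\<dots> = 1" using True assms unfolding agent_bundle_def a_def by (simp add: sum.delta')
    finally show ?thesis .
  next
    case False
    have bi: "agent_bundle m a i = B i"
    proof (intro set_eqI iffI)
      fix g assume "g \<in> agent_bundle m a i"
      then show "g \<in> B i" using False unfolding agent_bundle_def a_def B_def
        by (auto split: if_splits)
    next
      fix g assume "g \<in> B i"
      then show "g \<in> agent_bundle m a i" using False Bsub that unfolding agent_bundle_def a_def
        by (auto simp: B_def)
    qed
    have "(\<Sum>g\<in>agent_bundle m a i. u i g) = (\<Sum>g\<in>B i. 1 / real K)"
      unfolding bi using False that by (intro sum.cong) (auto simp: u_def)
    also have "\<dots> = 1" using cardB[of i] False that Kpos by simp
    finally show ?thesis .
  qed
  have opt: "real c + 1 \<le> OPT_USW m m u"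
  proof -
    have "real c + 1 = (\<Sum>i\<in>{..c}. (\<Sum>g\<in>agent_bundle m a i. u i g))" using val1 by simp
    also have "\<dots> \<le> (\<Sum>i<m. (\<Sum>g\<in>agent_bundle m a i. u i g))"
      using cm unn by (intro sum_mono2) (auto intro: sum_nonneg)
    also have "\<dots> = USW m m u a" unfolding USW_def ..
    also have "\<dots> \<le> OPT_USW m m u"
      unfolding OPT_USW_def using finA aA by (intro Max_ge) auto
    finally show ?thesis .
  qed
  have ratio: "(real c + 1) / 2 \<le> OPT_USW m m u / max_cardinal_USW m m k u"
  proof -
    have "(real c + 1) / 2 \<le> OPT_USW m m u / 2" using opt by simp
    also have "\<dots> \<le> OPT_USW m m u / max_cardinal_USW m m k u"
      using maxle maxpos opt by (intro divide_left_mono) auto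
    finally show ?thesis .
  qed
  define y where "y = real M / real k"
  have my: "(real m - 1) / real k = y" unfolding y_def M_def using assms by (simp add: of_nat_diff)
  have y0: "0 \<le> y" unfolding y_def by simp
  have "real M < real ((c+1)*(c+1)*k)" using cbig by linarith
  then have "y < (real c + 1)^2" unfolding y_def using assms(1)
    by (simp add: divide_less_eq power2_eq_square algebra_simps)
  then have sy: "sqrt y < real c + 1"
    using real_sqrt_less_iff[of y "(real c + 1)^2"] by simp
  have "sqrt (1 + y) \<le> sqrt ((1 + sqrt y)^2)"
    using y0 by (intro real_sqrt_le_mono) (simp add: power2_eq_square algebra_simps)
  also have "\<dots> = 1 + sqrt y" using y0 by simp
  finally have "sqrt (1 + y) \<le> 1 + sqrt y" .
  then have "(1/2) * (-1 + sqrt (1 + y)) \<le> (real c + 1) / 2" using sy by simp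
  then have fin: "(1/2) * (-1 + sqrt (1 + (real m - 1) / real k)) \<le> OPT_USW m m u / max_cardinal_USW m m k u"
    using ratio my by simp
  have "k * m \<ge> m" using assms by simp
  then show ?thesis using valid fin by blast
qed

end
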